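(* Let $X=\{1,\dots,n\}$, $Y$ finite, $Q$ a symmetric irreducible stochastic matrix on $Y$ (notation in context). Let $0\le k\le h\le n-1$ and let $\underline a=(a_0,\dots,a_m)$ be a type with $a_0+\cdots+a_m=h+1$ and $\ell(\underline a)\le k$; put $\underline a'=(a_0-1,a_1,\dots,a_m)$. Then every $F\in P_{h,\underline a',k}$ satisfies $$\Delta_hF=\big(|Y|(n+\ell(\underline a)-k-h)(h-k+1)-|Y|(n-h)\big)F.$$
   Context: $Q$ acts on $L(Y)$ by $(Qf)(y)=\sum_{y'}q(y,y')f(y')$, with distinct eigenvalues $\lambda_0=1,\dots,\lambda_m$ and eigenspaces $W_0$ (constants), $W_1,\dots,W_m$. For $0\le k\le n$, $\Theta_k$ is the set of functions $\theta$ with $\mathrm{dom}(\theta)$ a $k$-subset of $X$ and values in $Y$ ($\Theta_0$ = empty function); $\varphi\subseteq\theta$ means $\mathrm{dom}\varphi\subseteq\mathrm{dom}\theta$ and $\theta|_{\mathrm{dom}\varphi}=\varphi$. For $1\le k\le n$: $(D_kF)(\varphi)=\sum_{\theta\in\Theta_k:\theta\supseteq\varphi}F(\theta)$ ($D_k:L(\Theta_k)\to L(\Theta_{k-1})$) and $(D_k^*F)(\theta)=\sum_{\varphi\in\Theta_{k-1}:\varphi\subseteq\theta}F(\varphi)$; $D_0:=0$. $\Delta_h$ is the operator on $L(\Theta_h)$ given by $(\Delta_hF)(\theta)=\sum F(\varphi)$, the sum over all $\varphi\in\Theta_h$ with $|\mathrm{dom}\varphi\cap\mathrm{dom}\theta|=h-1$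 and $\varphi=\theta$ on $\mathrm{dom}\varphi\cap\mathrm{dom}\theta$. Types $\underline b=(b_0,\dots,b_m)$, $|\underline b|=\sum b_i$, $\ell(\underline b)=b_1+\cdots+b_m$, $\underline b'=(b_0-1,b_1,\dots,b_m)$. A fundamental function of type $\underline b$ on $A$, $|A|=|\underline b|$, is $F=\bigotimes_{j\in A}F^j$ ($F(\theta)=\prod_{j\in A}F^j(\theta(j))$ on $Y^A$, $0$ elsewhere) with each $F^j$ in some $W_{i_j}$ and exactly $b_i$ indices with $i_j=i$; $P_{k,\underline b,A}$ is their span, $P_{k,\underline b}=\bigoplus_{|A|=k}P_{k,\underline b,A}$ ($\{0\}$ if an entry is negative). $D_{k,\underline b}=D_k|_{P_{k,\underline b}}$, $D^*_{k,\underline b}=D^*_k|_{P_{k-1,\underline b'}}$. For $|\underline b|=k$: $P_{k,\underline b,k}=\ker D_{k,\underline b}$; for $k<h\le n$, $|\underline b|=h$, $\ell(\underline b)\le k$: $P_{h,\underline b,k}=D^*_{h,\underline b}(P_{h-1,\underline b',k})$. *)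

theory Defs
  imports "HOL-Analysis.Analysis" "HOL-Library.Function_Algebras"
begin

text \<open>Setting: X = {1..n}; Y is the finite type 'y (Y = UNIV); Q is given by the
  matrix q :: 'y \<Rightarrow> 'y \<Rightarrow> real. Functions on Theta_k are real-valued functions on maps
  which vanish outside Theta_k.\<close>

type_synonym 'y pfun = "nat \<Rightarrow> 'y option"
type_synonym 'y Lfun = "'y pfun \<Rightarrow> real"

definition Qop :: "('y::finite \<Rightarrow> 'y \<Rightarrow> real) \<Rightarrow> ('y \<Rightarrow> real) \<Rightarrow> ('y \<Rightarrow> real)" where
  "Qop q f = (\<lambda>y. \<Sum>y'\<in>UNIV. q y y' * f y')"

fun qpow :: "('y::finite \<Rightarrow> 'y \<Rightarrow> real) \<Rightarrow> nat \<Rightarrow> 'y \<Rightarrow> 'y \<Rightarrow> real" where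
  "qpow q 0 = (\<lambda>y y'. if y = y' then 1 else 0)"
| "qpow q (Suc t) = (\<lambda>y y'. \<Sum>z\<in>UNIV. q y z * qpow q t z y')"

definition symmetric_stochastic_irreducible :: "('y::finite \<Rightarrow> 'y \<Rightarrow> real) \<Rightarrow> bool" where
  "symmetric_stochastic_irreducible q \<longleftrightarrow>
     (\<forall>y y'. q y y' = q y' y) \<and>
     (\<forall>y y'. 0 \<le> q y y') \<and>
     (\<forall>y. (\<Sum>y'\<in>UNIV. q y y') = 1) \<and>
     (\<forall>y y'. \<exists>t. qpow q t y y' > 0)"

definition is_eigenvalue :: "('y::finite \<Rightarrow> 'y \<Rightarrow> real) \<Rightarrow> real \<Rightarrow> bool" where
  "is_eigenvalue q c \<longleftrightarrow> (\<exists>f. f \<noteq> 0 \<and> Qop q f = (\<lambda>y. c * f y))"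

definition eigen_enum :: "('y::finite \<Rightarrow> 'y \<Rightarrow> real) \<Rightarrow> nat \<Rightarrow> (nat \<Rightarrow> real) \<Rightarrow> bool" where
  "eigen_enum q m lam \<longleftrightarrow> lam 0 = 1 \<and> inj_on lam {0..m} \<and>
     {c. is_eigenvalue q c} = lam ` {0..m}"

definition Wsp :: "('y::finite \<Rightarrow> 'y \<Rightarrow> real) \<Rightarrow> (nat \<Rightarrow> real) \<Rightarrow> nat \<Rightarrow> ('y \<Rightarrow> real) set" where
  "Wsp q lam i = {f. Qop q f = (\<lambda>y. lam i * f y)}"

definition Theta :: "nat \<Rightarrow> nat \<Rightarrow> 'y pfun set" where
  "Theta n k = {\<theta>. dom \<theta> \<subseteq> {1..n} \<and> card (dom \<theta>) = k}"

definition Dop :: "nat \<Rightarrow> nat \<Rightarrow> 'y Lfun \<Rightarrow> 'y Lfun" where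
  "Dop n k F = (\<lambda>\<phi>. if k = 0 then 0 else if \<phi> \<in> Theta n (k - 1)
       then (\<Sum>\<theta>\<in>{\<theta> \<in> Theta n k. \<phi> \<subseteq>\<^sub>m \<theta>}. F \<theta>) else 0)"

definition Dstar :: "nat \<Rightarrow> nat \<Rightarrow> 'y Lfun \<Rightarrow> 'y Lfun" where
  "Dstar n k F = (\<lambda>\<theta>. if \<theta> \<in> Theta n k
       then (\<Sum>\<phi>\<in>{\<phi> \<in> Theta n (k - 1). \<phi> \<subseteq>\<^sub>m \<theta>}. F \<phi>) else 0)"

definition Delta :: "nat \<Rightarrow> nat \<Rightarrow> 'y Lfun \<Rightarrow> 'y Lfun" where
  "Delta n h F = (\<lambda>\<theta>. if \<theta> \<in> Theta n h
       then (\<Sum>\<phi>\<in>{\<phi> \<in> Theta n h. card (dom \<phi> \<inter> dom \<theta>) + 1 = h \<and>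
                         (\<forall>j\<in>dom \<phi> \<inter> dom \<theta>. \<phi> j = \<theta> j)}. F \<phi>) else 0)"

text \<open>Types b = (b_0,...,b_m) are represented as b :: nat \<Rightarrow> int (entries at 0..m).\<close>
definition tsize :: "nat \<Rightarrow> (nat \<Rightarrow> int) \<Rightarrow> int" where
  "tsize m b = (\<Sum>i=0..m. b i)"

definition tlen :: "nat \<Rightarrow> (nat \<Rightarrow> int) \<Rightarrow> int" where
  "tlen m b = (\<Sum>i=1..m. b i)"

definition tprime :: "(nat \<Rightarrow> int) \<Rightarrow> (nat \<Rightarrow> int)" where
  "tprime b = b(0 := b 0 - 1)"

definition fundamental ::
  "('y::finite \<Rightarrow> 'y \<Rightarrow> real) \<Rightarrow> nat \<Rightarrow> (nat \<Rightarrow> real) \<Rightarrow> (nat \<Rightarrow> int) \<Rightarrow> nat set \<Rightarrow> 'y Lfun set" where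
  "fundamental q m lam b A = {F. \<exists>(Fj :: nat \<Rightarrow> 'y \<Rightarrow> real) (ij :: nat \<Rightarrow> nat).
      (\<forall>j\<in>A. ij j \<le> m \<and> Fj j \<in> Wsp q lam (ij j)) \<and>
      (\<forall>i\<le>m. int (card {j\<in>A. ij j = i}) = b i) \<and>
      F = (\<lambda>\<theta>. if dom \<theta> = A then (\<Prod>j\<in>A. Fj j (the (\<theta> j))) else 0)}"

definition fun_span :: "'y Lfun set \<Rightarrow> 'y Lfun set" where
  "fun_span S = module.span (\<lambda>(c::real) (f::'y Lfun). (\<lambda>x. c * f x)) S"

text \<open>P_{k,b} = direct sum over k-subsets A of X of P_{k,b,A} (= span of the union);
  it is {0} if some entry of b is negative (no fundamental functions exist then).\<close>
definition Pkb ::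
  "('y::finite \<Rightarrow> 'y \<Rightarrow> real) \<Rightarrow> nat \<Rightarrow> (nat \<Rightarrow> real) \<Rightarrow> nat \<Rightarrow> nat \<Rightarrow> (nat \<Rightarrow> int) \<Rightarrow> 'y Lfun set" where
  "Pkb q m lam n k b = fun_span (\<Union>A\<in>{A. A \<subseteq> {1..n} \<and> card A = k}. fundamental q m lam b A)"

text \<open>Phk q m lam n k d b = P_{k+d, b, k}.\<close>
fun Phk ::
  "('y::finite \<Rightarrow> 'y \<Rightarrow> real) \<Rightarrow> nat \<Rightarrow> (nat \<Rightarrow> real) \<Rightarrow> nat \<Rightarrow> nat \<Rightarrow> nat \<Rightarrow> (nat \<Rightarrow> int) \<Rightarrow> 'y Lfun set" where
  "Phk q m lam n k 0 b = {F \<in> Pkb q m lam n k b. Dop n k F = 0}"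
| "Phk q m lam n k (Suc d) b = Dstar n (k + Suc d) ` Phk q m lam n k d (tprime b)"

definition Phbk ::
  "('y::finite \<Rightarrow> 'y \<Rightarrow> real) \<Rightarrow> nat \<Rightarrow> (nat \<Rightarrow> real) \<Rightarrow> nat \<Rightarrow> nat \<Rightarrow> (nat \<Rightarrow> int) \<Rightarrow> nat \<Rightarrow> 'y Lfun set" where
  "Phbk q m lam n h b k = Phk q m lam n k (h - k) b"

end

theory Submission
  imports Defs
begin


lemma finite_Theta: "finite (Theta n k :: ('y::finite) pfun set)"
proof -
  have "Theta n k \<subseteq> (\<Union>A\<in>Pow {1..n}. {m :: 'y pfun. dom m = A \<and> ran m \<subseteq> UNIV})"
    by (auto simp: Theta_def)
  moreover have "finite (\<Union>A\<in>Pow {1..n}. {m :: 'y pfun. dom m = A \<and> ran m \<subseteq> UNIV})"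
    by (intro finite_UN_I finite_set_of_finite_maps) (auto intro: finite_subset)
  ultimately show ?thesis by (rule finite_subset)
qed

lemma sum_Q_col:
  assumes "symmetric_stochastic_irreducible q"
  shows "(\<Sum>y\<in>UNIV. Qop q f y) = (\<Sum>y\<in>UNIV. f y)"
proof -
  have "(\<Sum>y\<in>UNIV. Qop q f y) = (\<Sum>y\<in>UNIV. \<Sum>y'\<in>UNIV. q y y' * f y')" by (simp add: Qop_def)
  also have "\<dots> = (\<Sum>y'\<in>UNIV. \<Sum>y\<in>UNIV. q y y' * f y')" by (rule sum.swap)
  also have "\<dots> = (\<Sum>y\<in>UNIV. f y)"
  proof (rule sum.cong)
    fix y' :: 'a
    have sym: "\<And>y y'. q y y' = q y' y" and rs: "\<And>y. (\<Sum>y'\<in>UNIV. q y y') = 1"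
      using assms unfolding symmetric_stochastic_irreducible_def by auto
    have "(\<Sum>y\<in>UNIV. q y y') = (\<Sum>y\<in>UNIV. q y' y)" by (rule sum.cong) (auto simp: sym)
    then have "(\<Sum>y\<in>UNIV. q y y') = 1" using rs by simp
    then show "(\<Sum>y\<in>UNIV. q y y' * f y') = f y'" by (simp add: sum_distrib_right[symmetric])
  qed simp
  finally show ?thesis .
qed

lemma Wsp_sum_zero:
  assumes "symmetric_stochastic_irreducible q" "eigen_enum q m lam" "i \<le> m" "i \<noteq> 0"
    "f \<in> Wsp q lam i"
  shows "(\<Sum>y\<in>UNIV. f y) = 0"
proof -
  have inj: "inj_on lam {0..m}" and l0: "lam 0 = 1" using assms(2) by (auto simp: eigen_enum_def)
  have "lam i \<noteq> 1"
  proof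
    assume "lam i = 1"
    then have "lam i = lam 0" using l0 by simp
    then have "i = 0" using inj_onD[OF inj] assms(3) by simp
    then show False using assms(4) by simp
  qed
  have "(\<Sum>y\<in>UNIV. Qop q f y) = lam i * (\<Sum>y\<in>UNIV. f y)"
    using assms(5) by (simp add: Wsp_def sum_distrib_left)
  then have "(\<Sum>y\<in>UNIV. f y) = lam i * (\<Sum>y\<in>UNIV. f y)" using sum_Q_col[OF assms(1)] by simp
  then have "(1 - lam i) * (\<Sum>y\<in>UNIV. f y) = 0" by (simp add: algebra_simps)
  with \<open>lam i \<noteq> 1\<close> show ?thesis by simp
qed

lemma Wsp0_const:
  assumes "symmetric_stochastic_irreducible q" "eigen_enum q m lam"
    "f \<in> Wsp q lam 0"
  shows "f y = f y'"
proof -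
  have sym: "\<And>y y'. q y y' = q y' y" and nn: "\<And>y y'. 0 \<le> q y y'"
    and rs: "\<And>y. (\<Sum>y'\<in>UNIV. q y y') = 1" and irr: "\<And>y y'. \<exists>t. qpow q t y y' > 0"
    using assms(1) unfolding symmetric_stochastic_irreducible_def by auto
  have Qf: "\<And>y. (\<Sum>y'\<in>UNIV. q y y' * f y') = f y"
    using assms(2,3) unfolding Wsp_def eigen_enum_def Qop_def by (auto dest: fun_cong)
  have E1: "(\<Sum>y\<in>UNIV. \<Sum>y'\<in>UNIV. q y y' * (f y - f y')^2)
     = (\<Sum>y\<in>UNIV. \<Sum>y'\<in>UNIV. q y y' * (f y)^2) + (\<Sum>y\<in>UNIV. \<Sum>y'\<in>UNIV. q y y' * (f y')^2)
       - 2 * (\<Sum>y\<in>UNIV. f y * (\<Sum>y'\<in>UNIV. q y y' * f y'))"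
    by (simp add: power2_eq_square algebra_simps sum.distrib sum_subtractf sum_distrib_left)
  have E2: "(\<Sum>y\<in>UNIV. \<Sum>y'\<in>UNIV. q y y' * (f y')^2) = (\<Sum>y'\<in>UNIV. \<Sum>y\<in>UNIV. q y' y * (f y')^2)"
    by (subst sum.swap) (simp add: sym)
  have E3: "(\<Sum>y'\<in>UNIV. \<Sum>y\<in>UNIV. q y' y * (f y')^2) = (\<Sum>y\<in>UNIV. (f y)^2)"
    by (simp add: sum_distrib_right[symmetric] rs)
  have E4: "(\<Sum>y\<in>UNIV. \<Sum>y'\<in>UNIV. q y y' * (f y)^2) = (\<Sum>y\<in>UNIV. (f y)^2)"
    by (simp add: sum_distrib_right[symmetric] rs)
  have E5: "(\<Sum>y\<in>UNIV. f y * (\<Sum>y'\<in>UNIV. q y y' * f y')) = (\<Sum>y\<in>UNIV. (f y)^2)"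
    by (simp add: Qf power2_eq_square)
  have D: "(\<Sum>y\<in>UNIV. \<Sum>y'\<in>UNIV. q y y' * (f y - f y')^2) = 0"
    unfolding E1 E2 E3 E4 E5 by simp
  have one: "q y y' > 0 \<Longrightarrow> f y = f y'" for y y'
  proof -
    assume p: "q y y' > 0"
    have "\<forall>y\<in>UNIV. (\<Sum>y'\<in>UNIV. q y y' * (f y - f y')^2) = 0"
      using D by (subst (asm) sum_nonneg_eq_0_iff) (auto intro!: sum_nonneg simp: nn)
    then have "(\<Sum>y'\<in>UNIV. q y y' * (f y - f y')^2) = 0" by simp
    then have "q y y' * (f y - f y')^2 = 0"
      by (subst (asm) sum_nonneg_eq_0_iff) (auto simp: nn)
    with p show ?thesis by simp
  qed
  have pw: "qpow q t y y' > 0 \<Longrightarrow> f y = f y'" for t y y'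
  proof (induction t arbitrary: y)
    case 0 then show ?case by (simp split: if_splits)
  next
    case (Suc t)
    then have "0 < (\<Sum>z\<in>UNIV. q y z * qpow q t z y')" by simp
    then obtain z where "q y z * qpow q t z y' > 0"
      by (metis (no_types, lifting) not_le sum_nonpos)
    then have "q y z > 0" "qpow q t z y' > 0" using nn[of y z]
      by (auto simp: zero_less_mult_iff)
    then have "f y = f z" "f z = f y'" using one Suc.IH by blast+
    then show ?case by simp
  qed
  obtain t where "qpow q t y y' > 0" using irr by blast
  then show ?thesis by (rule pw)
qed



lemma map_le_ext1:
  assumes le: "\<phi> \<subseteq>\<^sub>m \<theta>" and fin: "finite (dom \<theta>)"
    and c: "card (dom \<theta>) = Suc (card (dom \<phi>))"
  shows "\<exists>x. x \<notin> dom \<phi> \<and> x \<in> dom \<theta> \<and> \<theta> = \<phi>(x \<mapsto> the (\<theta> x))"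
proof -
  have sub: "dom \<phi> \<subseteq> dom \<theta>" using le by (rule map_le_implies_dom_le)
  then have "card (dom \<theta> - dom \<phi>) = 1" using c fin
    by (simp add: card_Diff_subset finite_subset)
  then obtain x where x: "dom \<theta> - dom \<phi> = {x}" by (auto simp: card_1_singleton_iff)
  have "\<theta> = \<phi>(x \<mapsto> the (\<theta> x))"
  proof
    fix z show "\<theta> z = (\<phi>(x \<mapsto> the (\<theta> x))) z"
    proof (cases "z = x")
      case True
      have "x \<in> dom \<theta>" using x by blast
      then show ?thesis using True by auto
    next
      case False
      show ?thesis
      proof (cases "z \<in> dom \<phi>")
        case True
        have "\<theta> z = \<phi> z" using le True by (auto simp: map_le_def)
        then show ?thesis using False by simp
      next
        case f2: False
        then have "z \<notin> dom \<theta>" using x False by auto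
        have "\<phi> z = None" using f2 by auto
        moreover have "\<theta> z = None" using \<open>z \<notin> dom \<theta>\<close> by auto
        ultimately show ?thesis using False by simp
      qed
    qed
  qed
  moreover have "x \<in> dom \<theta>" "x \<notin> dom \<phi>" using x by blast+
  ultimately show ?thesis by blast
qed

lemma Dstar_decomp:
  assumes th: "\<theta> \<in> Theta n j" and j: "1 \<le> j"
  shows "Dstar n j G \<theta> = (\<Sum>w\<in>dom \<theta>. G (\<theta> |` (- {w})))"
proof -
  have fin: "finite (dom \<theta>)" and sub: "dom \<theta> \<subseteq> {1..n}" and cd: "card (dom \<theta>) = j"
    using th by (auto simp: Theta_def intro: finite_subset)
  have bij: "bij_betw (\<lambda>w. \<theta> |` (- {w})) (dom \<theta>) {\<phi> \<in> Theta n (j - 1). \<phi> \<subseteq>\<^sub>m \<theta>}"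
  proof (rule bij_betw_imageI)
    show "inj_on (\<lambda>w. \<theta> |` (- {w})) (dom \<theta>)"
    proof (rule inj_onI)
      fix w w' assume "w \<in> dom \<theta>" "w' \<in> dom \<theta>" "\<theta> |` (- {w}) = \<theta> |` (- {w'})"
      then show "w = w'" by (metis (no_types, lifting) ComplD ComplI domD insertI1
            option.distinct(1) restrict_map_def singletonD)
    qed
    show "(\<lambda>w. \<theta> |` (- {w})) ` dom \<theta> = {\<phi> \<in> Theta n (j - 1). \<phi> \<subseteq>\<^sub>m \<theta>}"
    proof (intro set_eqI iffI)
      fix \<phi> assume "\<phi> \<in> (\<lambda>w. \<theta> |` (- {w})) ` dom \<theta>"
      then obtain w where w: "w \<in> dom \<theta>" "\<phi> = \<theta> |` (- {w})" by auto
      have "dom \<phi> = dom \<theta> - {w}" using w by auto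
      then show "\<phi> \<in> {\<phi> \<in> Theta n (j - 1). \<phi> \<subseteq>\<^sub>m \<theta>}"
        using w fin sub cd by (auto simp: Theta_def map_le_def restrict_map_def)
    next
      fix \<phi> assume "\<phi> \<in> {\<phi> \<in> Theta n (j - 1). \<phi> \<subseteq>\<^sub>m \<theta>}"
      then have le: "\<phi> \<subseteq>\<^sub>m \<theta>" and c: "card (dom \<phi>) = j - 1" by (auto simp: Theta_def)
      then obtain x where x: "x \<notin> dom \<phi>" "x \<in> dom \<theta>" "\<theta> = \<phi>(x \<mapsto> the (\<theta> x))"
        using map_le_ext1[OF le fin] cd j by auto
      have "\<phi> = \<theta> |` (- {x})"
      proof
        fix z show "\<phi> z = (\<theta> |` (- {x})) z"
          using x by (cases "z = x") (auto simp: restrict_map_def dest: fun_cong[where x = z])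
      qed
      then show "\<phi> \<in> (\<lambda>w. \<theta> |` (- {w})) ` dom \<theta>" using x by auto
    qed
  qed
  have "Dstar n j G \<theta> = (\<Sum>\<phi>\<in>{\<phi> \<in> Theta n (j - 1). \<phi> \<subseteq>\<^sub>m \<theta>}. G \<phi>)"
    using th by (simp add: Dstar_def)
  also have "\<dots> = (\<Sum>w\<in>dom \<theta>. G (\<theta> |` (- {w})))"
    by (rule sum.reindex_bij_betw[OF bij, symmetric])
  finally show ?thesis .
qed

lemma Dop_decomp:
  assumes ph: "\<phi> \<in> Theta n i"
  shows "Dop n (Suc i) F \<phi> = (\<Sum>x\<in>{1..n} - dom \<phi>. \<Sum>y\<in>UNIV. F (\<phi>(x \<mapsto> y)))"
proof -
  have fin: "finite (dom \<phi>)" and sub: "dom \<phi> \<subseteq> {1..n}" and cd: "card (dom \<phi>) = i"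
    using ph by (auto simp: Theta_def intro: finite_subset)
  have bij: "bij_betw (\<lambda>(x,y). \<phi>(x \<mapsto> y)) (({1..n} - dom \<phi>) \<times> UNIV) {\<theta> \<in> Theta n (Suc i). \<phi> \<subseteq>\<^sub>m \<theta>}"
  proof (rule bij_betw_imageI)
    show "inj_on (\<lambda>(x,y). \<phi>(x \<mapsto> y)) (({1..n} - dom \<phi>) \<times> UNIV)"
    proof (rule inj_onI)
      fix p p' assume pa: "p \<in> ({1..n} - dom \<phi>) \<times> (UNIV::'a set)" "p' \<in> ({1..n} - dom \<phi>) \<times> (UNIV::'a set)"
        and e0: "(\<lambda>(x,y). \<phi>(x \<mapsto> y)) p = (\<lambda>(x,y). \<phi>(x \<mapsto> y)) p'"
      obtain x y where p: "p = (x,y)" by fastforce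
      obtain x' y' where p': "p' = (x',y')" by fastforce
      have a: "x \<notin> dom \<phi>" "x' \<notin> dom \<phi>" using pa p p' by auto
      have e: "\<phi>(x \<mapsto> y) = \<phi>(x' \<mapsto> y')" using e0 p p' by simp
      from fun_cong[OF e, of x] a have "x = x'" by (auto split: if_splits)
      with fun_cong[OF e, of x] show "p = p'" using p p' by simp
    qed
    show "(\<lambda>(x,y). \<phi>(x \<mapsto> y)) ` (({1..n} - dom \<phi>) \<times> UNIV) = {\<theta> \<in> Theta n (Suc i). \<phi> \<subseteq>\<^sub>m \<theta>}"
    proof (intro set_eqI iffI)
      fix \<theta> assume "\<theta> \<in> (\<lambda>(x,y). \<phi>(x \<mapsto> y)) ` (({1..n} - dom \<phi>) \<times> UNIV)"
      then obtain p where p: "p \<in> ({1..n} - dom \<phi>) \<times> (UNIV::'a set)" "\<theta> = (\<lambda>(x,y). \<phi>(x \<mapsto> y)) p" by blast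
      obtain x y where pxy: "p = (x,y)" by fastforce
      have xy: "x \<in> {1..n}" "x \<notin> dom \<phi>" "\<theta> = \<phi>(x \<mapsto> y)" using p pxy by auto
      then show "\<theta> \<in> {\<theta> \<in> Theta n (Suc i). \<phi> \<subseteq>\<^sub>m \<theta>}"
        using fin sub cd by (auto simp: Theta_def map_le_def)
    next
      fix \<theta> assume "\<theta> \<in> {\<theta> \<in> Theta n (Suc i). \<phi> \<subseteq>\<^sub>m \<theta>}"
      then have le: "\<phi> \<subseteq>\<^sub>m \<theta>" and c: "card (dom \<theta>) = Suc i" and s2: "dom \<theta> \<subseteq> {1..n}"
        by (auto simp: Theta_def)
      have fin2: "finite (dom \<theta>)" using s2 by (rule finite_subset) simp
      obtain x where x: "x \<notin> dom \<phi>" "x \<in> dom \<theta>" "\<theta> = \<phi>(x \<mapsto> the (\<theta> x))"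
        using map_le_ext1[OF le fin2] c cd by auto
      then show "\<theta> \<in> (\<lambda>(x,y). \<phi>(x \<mapsto> y)) ` (({1..n} - dom \<phi>) \<times> UNIV)"
        using s2 by (intro image_eqI[of _ _ "(x, the (\<theta> x))"]) auto
    qed
  qed
  have "Dop n (Suc i) F \<phi> = (\<Sum>\<theta>\<in>{\<theta> \<in> Theta n (Suc i). \<phi> \<subseteq>\<^sub>m \<theta>}. F \<theta>)"
    using ph by (simp add: Dop_def)
  also have "\<dots> = (\<Sum>(x,y)\<in>({1..n} - dom \<phi>) \<times> UNIV. F (\<phi>(x \<mapsto> y)))"
    using sum.reindex_bij_betw[OF bij, of F] by (simp add: case_prod_unfold)
  also have "\<dots> = (\<Sum>x\<in>{1..n} - dom \<phi>. \<Sum>y\<in>UNIV. F (\<phi>(x \<mapsto> y)))"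
    by (simp add: sum.cartesian_product)
  finally show ?thesis .
qed



definition Gam :: "('y::finite) Lfun \<Rightarrow> 'y Lfun" where
  "Gam F = (\<lambda>\<theta>. \<Sum>z\<in>dom \<theta>. \<Sum>y\<in>UNIV. F (\<theta>(z \<mapsto> y)))"

lemma upd_restrict_self: "x \<notin> dom \<theta> \<Longrightarrow> (\<theta>(x \<mapsto> y)) |` (- {x}) = \<theta>"
  by (rule ext) (auto simp: restrict_map_def)

lemma restrict_upd_same: "(\<theta> |` (- {w}))(w \<mapsto> y) = \<theta>(w \<mapsto> y)"
  by (rule ext) (auto simp: restrict_map_def)

lemma restrict_upd_other: "x \<noteq> w \<Longrightarrow> (\<theta> |` (- {w}))(x \<mapsto> y) = (\<theta>(x \<mapsto> y)) |` (- {w})"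
  by (rule ext) (auto simp: restrict_map_def)

lemma upd_restrict_same: "(\<theta>(w \<mapsto> y)) |` (- {w}) = \<theta> |` (- {w})"
  by (rule ext) (auto simp: restrict_map_def)

lemma restrict_notin: "x \<notin> dom \<theta> \<Longrightarrow> \<theta> |` (- {x}) = \<theta>"
  by (rule ext) (auto simp: restrict_map_def)

lemma dom_rm: "dom (\<theta> |` (- {w})) = dom \<theta> - {w}"
  by auto

lemma Theta_facts:
  assumes "\<theta> \<in> Theta n j"
  shows "finite (dom \<theta>)" "dom \<theta> \<subseteq> {1..n}" "card (dom \<theta>) = j"
  using assms by (auto simp: Theta_def intro: finite_subset)

lemma DDs_decomp:
  fixes F :: "('y::finite) Lfun"
  assumes th: "\<theta> \<in> Theta n j"
  shows "Dop n (Suc j) (Dstar n (Suc j) F) \<theta> =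
     real (n - j) * real CARD('y) * F \<theta> +
     (\<Sum>x\<in>{1..n} - dom \<theta>. \<Sum>y\<in>UNIV. \<Sum>w\<in>dom \<theta>. F ((\<theta>(x \<mapsto> y)) |` (- {w})))"
proof -
  note tf = Theta_facts[OF th]
  have "Dop n (Suc j) (Dstar n (Suc j) F) \<theta> =
      (\<Sum>x\<in>{1..n} - dom \<theta>. \<Sum>y\<in>UNIV. Dstar n (Suc j) F (\<theta>(x \<mapsto> y)))"
    by (rule Dop_decomp[OF th])
  also have "\<dots> = (\<Sum>x\<in>{1..n} - dom \<theta>. \<Sum>y\<in>UNIV. F \<theta> +
       (\<Sum>w\<in>dom \<theta>. F ((\<theta>(x \<mapsto> y)) |` (- {w}))))"
  proof (intro sum.cong refl)
    fix x y assume x: "x \<in> {1..n} - dom \<theta>"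
    have th2: "\<theta>(x \<mapsto> y) \<in> Theta n (Suc j)"
      using x tf by (auto simp: Theta_def)
    have "Dstar n (Suc j) F (\<theta>(x \<mapsto> y)) = (\<Sum>w\<in>insert x (dom \<theta>). F ((\<theta>(x \<mapsto> y)) |` (- {w})))"
      using Dstar_decomp[OF th2] by simp
    also have "\<dots> = F \<theta> + (\<Sum>w\<in>dom \<theta>. F ((\<theta>(x \<mapsto> y)) |` (- {w})))"
      using x tf by (simp add: restrict_notin)
    finally show "Dstar n (Suc j) F (\<theta>(x \<mapsto> y)) = F \<theta> + (\<Sum>w\<in>dom \<theta>. F ((\<theta>(x \<mapsto> y)) |` (- {w})))" .
  qed
  also have "\<dots> = real (card ({1..n} - dom \<theta>)) * real CARD('y) * F \<theta> +
     (\<Sum>x\<in>{1..n} - dom \<theta>. \<Sum>y\<in>UNIV. \<Sum>w\<in>dom \<theta>. F ((\<theta>(x \<mapsto> y)) |` (- {w})))"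
    by (simp add: sum.distrib)
  also have "card ({1..n} - dom \<theta>) = n - j" using tf by (simp add: card_Diff_subset)
  finally show ?thesis .
qed

lemma comm:
  fixes F :: "('y::finite) Lfun"
  assumes th: "\<theta> \<in> Theta n j"
  shows "Dop n (Suc j) (Dstar n (Suc j) F) \<theta> =
     Dstar n j (Dop n j F) \<theta> + real (n - j) * real CARD('y) * F \<theta> - Gam F \<theta>"
proof -
  note tf = Theta_facts[OF th]
  define T where "T = (\<Sum>x\<in>{1..n} - dom \<theta>. \<Sum>y\<in>UNIV. \<Sum>w\<in>dom \<theta>. F ((\<theta>(x \<mapsto> y)) |` (- {w})))"
  have "Dstar n j (Dop n j F) \<theta> = Gam F \<theta> + T"
  proof (cases j)
    case 0
    then have "dom \<theta> = {}" using tf by auto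
    moreover have "Dop n j F = 0" using 0 by (simp add: Dop_def fun_eq_iff)
    ultimately show ?thesis using th by (simp add: Dstar_def Gam_def T_def)
  next
    case (Suc i)
    have "Dstar n j (Dop n j F) \<theta> = (\<Sum>w\<in>dom \<theta>. Dop n (Suc i) F (\<theta> |` (- {w})))"
      using Dstar_decomp[OF th] Suc by simp
    also have "\<dots> = (\<Sum>w\<in>dom \<theta>. (\<Sum>y\<in>UNIV. F (\<theta>(w \<mapsto> y))) +
        (\<Sum>x\<in>{1..n} - dom \<theta>. \<Sum>y\<in>UNIV. F ((\<theta>(x \<mapsto> y)) |` (- {w}))))"
    proof (rule sum.cong[OF refl])
      fix w assume w: "w \<in> dom \<theta>"
      have dr: "dom (\<theta> |` (- {w})) = dom \<theta> - {w}" by auto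
      have cw: "card (dom \<theta> - {w}) = i" using tf w Suc by (simp add: card_Diff_singleton)
      have th2: "\<theta> |` (- {w}) \<in> Theta n i"
        unfolding Theta_def mem_Collect_eq dr using cw tf by auto
      have eq: "{1..n} - dom (\<theta> |` (- {w})) = insert w ({1..n} - dom \<theta>)"
        using tf w by (auto simp: dr)
      have "Dop n (Suc i) F (\<theta> |` (- {w})) =
          (\<Sum>x\<in>insert w ({1..n} - dom \<theta>). \<Sum>y\<in>UNIV. F ((\<theta> |` (- {w}))(x \<mapsto> y)))"
        using Dop_decomp[OF th2] eq by simp
      also have "\<dots> = (\<Sum>y\<in>UNIV. F ((\<theta> |` (- {w}))(w \<mapsto> y))) +
          (\<Sum>x\<in>{1..n} - dom \<theta>. \<Sum>y\<in>UNIV. F ((\<theta> |` (- {w}))(x \<mapsto> y)))"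
        using w by (simp add: sum.insert)
      also have "\<dots> = (\<Sum>y\<in>UNIV. F (\<theta>(w \<mapsto> y))) +
          (\<Sum>x\<in>{1..n} - dom \<theta>. \<Sum>y\<in>UNIV. F ((\<theta>(x \<mapsto> y)) |` (- {w})))"
        using w by (auto simp: restrict_upd_same restrict_upd_other intro!: sum.cong)
      finally show "Dop n (Suc i) F (\<theta> |` (- {w})) = (\<Sum>y\<in>UNIV. F (\<theta>(w \<mapsto> y))) +
          (\<Sum>x\<in>{1..n} - dom \<theta>. \<Sum>y\<in>UNIV. F ((\<theta>(x \<mapsto> y)) |` (- {w})))" .
    qed
    also have "\<dots> = Gam F \<theta> + (\<Sum>w\<in>dom \<theta>. \<Sum>x\<in>{1..n} - dom \<theta>. \<Sum>y\<in>UNIV. F ((\<theta>(x \<mapsto> y)) |` (- {w})))"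
      by (simp add: sum.distrib Gam_def)
    also have "(\<Sum>w\<in>dom \<theta>. \<Sum>x\<in>{1..n} - dom \<theta>. \<Sum>y\<in>UNIV. F ((\<theta>(x \<mapsto> y)) |` (- {w}))) = T"
      unfolding T_def
      by (subst sum.swap) (rule sum.cong[OF refl], rule sum.swap)
    finally show ?thesis .
  qed
  then show ?thesis using DDs_decomp[OF th, of F] by (simp add: T_def)
qed

lemma Dstar_scale: "Dstar n j (\<lambda>\<theta>. c * G \<theta>) = (\<lambda>\<theta>. c * Dstar n j G \<theta>)"
  by (simp add: Dstar_def sum_distrib_left fun_eq_iff)

lemma Dstar_zero: "Dstar n j 0 = 0"
  by (simp add: Dstar_def fun_eq_iff)

lemma sum_swap_diff:
  fixes f :: "'a \<Rightarrow> 'a \<Rightarrow> 'b::ab_group_add"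
  assumes "finite A"
  shows "(\<Sum>z\<in>A. \<Sum>w\<in>A - {z}. f z w) = (\<Sum>w\<in>A. \<Sum>z\<in>A - {w}. f z w)"
proof -
  have "(\<Sum>z\<in>A. \<Sum>w\<in>A - {z}. f z w) = (\<Sum>z\<in>A. (\<Sum>w\<in>A. f z w) - f z z)"
    using assms by (intro sum.cong refl) (simp add: sum_diff1)
  also have "\<dots> = (\<Sum>z\<in>A. \<Sum>w\<in>A. f z w) - (\<Sum>z\<in>A. f z z)"
    by (rule sum_subtractf)
  also have "(\<Sum>z\<in>A. \<Sum>w\<in>A. f z w) = (\<Sum>w\<in>A. \<Sum>z\<in>A. f z w)"
    by (rule sum.swap)
  also have "(\<Sum>w\<in>A. \<Sum>z\<in>A. f z w) - (\<Sum>z\<in>A. f z z) = (\<Sum>w\<in>A. (\<Sum>z\<in>A. f z w) - f w w)"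
    by (simp add: sum_subtractf)
  also have "\<dots> = (\<Sum>w\<in>A. \<Sum>z\<in>A - {w}. f z w)"
    using assms by (intro sum.cong refl) (simp add: sum_diff1)
  finally show ?thesis .
qed

lemma Gam_Dstar:
  fixes G :: "('y::finite) Lfun"
  assumes j: "1 \<le> j" and gG: "Gam G = (\<lambda>\<theta>. c * G \<theta>)"
  shows "Gam (Dstar n j G) = (\<lambda>\<theta>. (real CARD('y) + c) * Dstar n j G \<theta>)"
proof
  fix \<theta> :: "'y pfun"
  show "Gam (Dstar n j G) \<theta> = (real CARD('y) + c) * Dstar n j G \<theta>"
  proof (cases "\<theta> \<in> Theta n j")
    case False
    have "\<And>z y. z \<in> dom \<theta> \<Longrightarrow> \<theta>(z \<mapsto> y) \<notin> Theta n j"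
      using False by (auto simp: Theta_def insert_absorb)
    then have "Gam (Dstar n j G) \<theta> = 0" by (simp add: Gam_def Dstar_def)
    then show ?thesis using False by (simp add: Dstar_def)
  next
    case True
    note tf = Theta_facts[OF True]
    have "Gam (Dstar n j G) \<theta> = (\<Sum>z\<in>dom \<theta>. \<Sum>y\<in>UNIV. G (\<theta> |` (- {z})) +
         (\<Sum>w\<in>dom \<theta> - {z}. G ((\<theta> |` (- {w}))(z \<mapsto> y))))"
      unfolding Gam_def
    proof (intro sum.cong refl)
      fix z y assume z: "z \<in> dom \<theta>"
      have dz: "dom (\<theta>(z \<mapsto> y)) = dom \<theta>" using z by auto
      have th2: "\<theta>(z \<mapsto> y) \<in> Theta n j" using True dz by (simp add: Theta_def)
      have "Dstar n j G (\<theta>(z \<mapsto> y)) = (\<Sum>w\<in>dom \<theta>. G ((\<theta>(z \<mapsto> y)) |` (- {w})))"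
        using Dstar_decomp[OF th2 j] dz by simp
      also have "\<dots> = G ((\<theta>(z \<mapsto> y)) |` (- {z})) + (\<Sum>w\<in>dom \<theta> - {z}. G ((\<theta>(z \<mapsto> y)) |` (- {w})))"
        using z tf by (simp add: sum.remove)
      also have "\<dots> = G (\<theta> |` (- {z})) + (\<Sum>w\<in>dom \<theta> - {z}. G ((\<theta> |` (- {w}))(z \<mapsto> y)))"
        by (auto simp: upd_restrict_same restrict_upd_other intro!: sum.cong)
      finally show "Dstar n j G (\<theta>(z \<mapsto> y)) = G (\<theta> |` (- {z})) + (\<Sum>w\<in>dom \<theta> - {z}. G ((\<theta> |` (- {w}))(z \<mapsto> y)))" .
    qed
    also have "\<dots> = real CARD('y) * (\<Sum>z\<in>dom \<theta>. G (\<theta> |` (- {z}))) +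
        (\<Sum>z\<in>dom \<theta>. \<Sum>w\<in>dom \<theta> - {z}. \<Sum>y\<in>UNIV. G ((\<theta> |` (- {w}))(z \<mapsto> y)))"
    proof -
      have "\<And>z. (\<Sum>y\<in>UNIV. \<Sum>w\<in>dom \<theta> - {z}. G ((\<theta> |` (- {w}))(z \<mapsto> y)))
         = (\<Sum>w\<in>dom \<theta> - {z}. \<Sum>y\<in>UNIV. G ((\<theta> |` (- {w}))(z \<mapsto> y)))"
        by (rule sum.swap)
      then show ?thesis by (simp add: sum.distrib sum_distrib_left)
    qed
    also have "(\<Sum>z\<in>dom \<theta>. \<Sum>w\<in>dom \<theta> - {z}. \<Sum>y\<in>UNIV. G ((\<theta> |` (- {w}))(z \<mapsto> y)))
        = (\<Sum>w\<in>dom \<theta>. \<Sum>z\<in>dom \<theta> - {w}. \<Sum>y\<in>UNIV. G ((\<theta> |` (- {w}))(z \<mapsto> y)))"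
      by (rule sum_swap_diff[OF tf(1)])
    also have "\<dots> = (\<Sum>w\<in>dom \<theta>. Gam G (\<theta> |` (- {w})))"
      by (intro sum.cong refl) (simp only: Gam_def dom_rm)
    also have "\<dots> = c * (\<Sum>w\<in>dom \<theta>. G (\<theta> |` (- {w})))"
      by (simp add: gG sum_distrib_left)
    finally show ?thesis using Dstar_decomp[OF True j, of G] by (simp add: algebra_simps)
  qed
qed



lemma Delta_eq:
  fixes F :: "('y::finite) Lfun"
  assumes th: "\<theta> \<in> Theta n h"
  shows "Delta n h F \<theta> = Dop n (Suc h) (Dstar n (Suc h) F) \<theta> - real (n - h) * real CARD('y) * F \<theta>"
proof -
  note tf = Theta_facts[OF th]
  define S where "S = {\<phi> \<in> Theta n h. card (dom \<phi> \<inter> dom \<theta>) + 1 = h \<and>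
                         (\<forall>j\<in>dom \<phi> \<inter> dom \<theta>. \<phi> j = \<theta> j)}"
  define g where "g = (\<lambda>(x, y, w). ((\<theta>(x \<mapsto> y)) |` (- {w})) :: 'y pfun)"
  have bij: "bij_betw g (({1..n} - dom \<theta>) \<times> (UNIV::'y set) \<times> dom \<theta>) S"
  proof (rule bij_betw_imageI)
    show "inj_on g (({1..n} - dom \<theta>) \<times> (UNIV::'y set) \<times> dom \<theta>)"
    proof (rule inj_onI)
      fix p p' assume pa: "p \<in> ({1..n} - dom \<theta>) \<times> (UNIV::'y set) \<times> dom \<theta>"
        "p' \<in> ({1..n} - dom \<theta>) \<times> (UNIV::'y set) \<times> dom \<theta>" and e0: "g p = g p'"
      obtain x y w where p: "p = (x, y, w)" by (cases p) auto
      obtain x' y' w' where p': "p' = (x', y', w')" by (cases p') auto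
      have a: "x \<notin> dom \<theta>" "x' \<notin> dom \<theta>" "w \<in> dom \<theta>" "w' \<in> dom \<theta>" using pa p p' by auto
      have e: "(\<theta>(x \<mapsto> y)) |` (- {w}) = (\<theta>(x' \<mapsto> y')) |` (- {w'})" using e0 p p' by (simp add: g_def)
      have xw: "x \<noteq> w" "x' \<noteq> w'" using a by auto
      have "x = x'"
      proof (rule ccontr)
        assume "x \<noteq> x'"
        from fun_cong[OF e, of x] xw a have "Some y = (\<theta>(x' \<mapsto> y') |` (- {w'})) x" by simp
        with \<open>x \<noteq> x'\<close> a show False by (auto simp: restrict_map_def split: if_splits)
      qed
      moreover have "y = y'" using fun_cong[OF e, of x] xw \<open>x = x'\<close> by simp
      moreover have "w = w'"
      proof (rule ccontr)
        assume "w \<noteq> w'"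
        from fun_cong[OF e, of w] a xw \<open>x = x'\<close> \<open>w \<noteq> w'\<close> show False
          by (auto simp: restrict_map_def)
      qed
      ultimately show "p = p'" using p p' by simp
    qed
    show "g ` (({1..n} - dom \<theta>) \<times> (UNIV::'y set) \<times> dom \<theta>) = S"
    proof (intro set_eqI iffI)
      fix \<phi> assume "\<phi> \<in> g ` (({1..n} - dom \<theta>) \<times> (UNIV::'y set) \<times> dom \<theta>)"
      then obtain p where p: "p \<in> ({1..n} - dom \<theta>) \<times> (UNIV::'y set) \<times> dom \<theta>" "\<phi> = g p" by blast
      obtain x y w where pxy: "p = (x, y, w)" by (cases p) auto
      have a: "x \<in> {1..n}" "x \<notin> dom \<theta>" "w \<in> dom \<theta>" and ph: "\<phi> = (\<theta>(x \<mapsto> y)) |` (- {w})"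
        using p pxy by (auto simp: g_def)
      have xw: "x \<noteq> w" using a by auto
      have d1: "dom \<phi> = insert x (dom \<theta> - {w})" using ph xw by auto
      have d2: "dom \<phi> \<inter> dom \<theta> = dom \<theta> - {w}" using d1 a by auto
      have c1: "card (dom \<theta> - {w}) + 1 = h" using a tf
        by (simp add: card_Diff_singleton) (metis One_nat_def Suc_pred card_gt_0_iff empty_iff)
      have "card (dom \<phi>) = h" using d1 c1 a tf by simp
      moreover have "dom \<phi> \<subseteq> {1..n}" using d1 a tf by auto
      moreover have "\<forall>j\<in>dom \<phi> \<inter> dom \<theta>. \<phi> j = \<theta> j" using d2 ph a by auto
      ultimately show "\<phi> \<in> S" unfolding S_def Theta_def using d2 c1 by simp
    next
      fix \<phi> assume "\<phi> \<in> S"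
      then have s1: "dom \<phi> \<subseteq> {1..n}" "card (dom \<phi>) = h" and
        s2: "card (dom \<phi> \<inter> dom \<theta>) + 1 = h" and s3: "\<forall>j\<in>dom \<phi> \<inter> dom \<theta>. \<phi> j = \<theta> j"
        by (auto simp: S_def Theta_def)
      have fp: "finite (dom \<phi>)" using finite_subset[OF s1(1)] by simp
      have "card (dom \<phi> - dom \<theta>) = 1"
        using s1 s2 fp by (simp add: card_Diff_subset_Int)
      then obtain x where x: "dom \<phi> - dom \<theta> = {x}" by (auto simp: card_1_singleton_iff)
      have "card (dom \<theta> - dom \<phi>) = 1"
        using s2 tf by (simp add: card_Diff_subset_Int Int_commute)
      then obtain w where w: "dom \<theta> - dom \<phi> = {w}" by (auto simp: card_1_singleton_iff)
      have xs: "x \<in> dom \<phi>" "x \<notin> dom \<theta>" "w \<in> dom \<theta>" "w \<notin> dom \<phi>" using x w by blast+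
      have "\<phi> = (\<theta>(x \<mapsto> the (\<phi> x))) |` (- {w})"
      proof
        fix z show "\<phi> z = ((\<theta>(x \<mapsto> the (\<phi> x))) |` (- {w})) z"
        proof (cases "z = w")
          case True then show ?thesis using xs by (auto simp: restrict_map_def)
        next
          case nw: False
          show ?thesis
          proof (cases "z = x")
            case True then show ?thesis using xs nw by (auto simp: restrict_map_def)
          next
            case nx: False
            show ?thesis
            proof (cases "z \<in> dom \<phi> \<inter> dom \<theta>")
              case True then show ?thesis using s3 nw nx by (auto simp: restrict_map_def)
            next
              case False
              then have "z \<notin> dom \<phi>" "z \<notin> dom \<theta>" using x w nw nx by blast+
              then have "\<phi> z = None" "\<theta> z = None" by (simp_all add: domIff)
              then show ?thesis using nw nx by (simp add: restrict_map_def)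
            qed
          qed
        qed
      qed
      moreover have "x \<in> {1..n}" using xs s1 by auto
      ultimately show "\<phi> \<in> g ` (({1..n} - dom \<theta>) \<times> (UNIV::'y set) \<times> dom \<theta>)"
        using xs unfolding g_def by (intro image_eqI[of _ _ "(x, the (\<phi> x), w)"]) auto
    qed
  qed
  have "Delta n h F \<theta> = (\<Sum>\<phi>\<in>S. F \<phi>)" using th by (simp add: Delta_def S_def)
  also have "\<dots> = (\<Sum>p\<in>({1..n} - dom \<theta>) \<times> (UNIV::'y set) \<times> dom \<theta>. F (g p))"
    by (rule sum.reindex_bij_betw[OF bij, symmetric])
  also have "\<dots> = (\<Sum>x\<in>{1..n} - dom \<theta>. \<Sum>y\<in>UNIV. \<Sum>w\<in>dom \<theta>. F ((\<theta>(x \<mapsto> y)) |` (- {w})))"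
    by (simp add: sum.cartesian_product g_def case_prod_unfold)
  finally show ?thesis using DDs_decomp[OF th, of F] by simp
qed



lemma mod_fun: "module (\<lambda>(c::real) (f::'a \<Rightarrow> real) x. c * f x)"
  by unfold_locales (auto simp: fun_eq_iff algebra_simps plus_fun_def)

lemma fund_props:
  fixes q :: "'y::finite \<Rightarrow> 'y \<Rightarrow> real"
  assumes ssi: "symmetric_stochastic_irreducible q" and ee: "eigen_enum q m lam"
    and F: "F \<in> fundamental q m lam c A" and A: "A \<subseteq> {1..n}" "card A = j"
  shows "(\<forall>\<theta>. \<theta> \<notin> Theta n j \<longrightarrow> F \<theta> = 0) \<and> Gam F = (\<lambda>\<theta>. real CARD('y) * of_int (c 0) * F \<theta>)"
proof -
  obtain Fj :: "nat \<Rightarrow> 'y \<Rightarrow> real" and ij :: "nat \<Rightarrow> nat" where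
    h1: "\<forall>j\<in>A. ij j \<le> m \<and> Fj j \<in> Wsp q lam (ij j)" and
    h2: "\<forall>i\<le>m. int (card {j\<in>A. ij j = i}) = c i" and
    Fd: "F = (\<lambda>\<theta>. if dom \<theta> = A then (\<Prod>j\<in>A. Fj j (the (\<theta> j))) else 0)"
    using F unfolding fundamental_def by blast
  have finA: "finite A" using A(1) by (rule finite_subset) simp
  have supp: "\<forall>\<theta>. \<theta> \<notin> Theta n j \<longrightarrow> F \<theta> = 0"
    using A by (auto simp: Fd Theta_def)
  have "Gam F \<theta> = real CARD('y) * of_int (c 0) * F \<theta>" for \<theta>
  proof (cases "dom \<theta> = A")
    case False
    then have "\<And>z y. z \<in> dom \<theta> \<Longrightarrow> F (\<theta>(z \<mapsto> y)) = 0" by (auto simp: Fd insert_absorb)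
    then show ?thesis using False by (simp add: Gam_def Fd)
  next
    case True
    define R where "R z = (\<Prod>i\<in>A - {z}. Fj i (the (\<theta> i)))" for z
    have Fth: "F \<theta> = Fj z (the (\<theta> z)) * R z" if "z \<in> A" for z
      using True that finA by (simp add: Fd R_def prod.remove)
    have "Gam F \<theta> = (\<Sum>z\<in>A. \<Sum>y\<in>UNIV. Fj z y * R z)"
      unfolding Gam_def True
    proof (intro sum.cong refl)
      fix z y assume z: "z \<in> A"
      have "dom (\<theta>(z \<mapsto> y)) = A" using True z by auto
      then have "F (\<theta>(z \<mapsto> y)) = (\<Prod>i\<in>A. Fj i (the ((\<theta>(z \<mapsto> y)) i)))" by (simp add: Fd)
      also have "\<dots> = Fj z y * (\<Prod>i\<in>A - {z}. Fj i (the ((\<theta>(z \<mapsto> y)) i)))"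
        using z finA by (simp add: prod.remove)
      also have "(\<Prod>i\<in>A - {z}. Fj i (the ((\<theta>(z \<mapsto> y)) i))) = R z"
        unfolding R_def by (intro prod.cong refl) auto
      finally show "F (\<theta>(z \<mapsto> y)) = Fj z y * R z" .
    qed
    also have "\<dots> = (\<Sum>z\<in>A. if ij z = 0 then real CARD('y) * F \<theta> else 0)"
    proof (intro sum.cong refl)
      fix z assume z: "z \<in> A"
      show "(\<Sum>y\<in>UNIV. Fj z y * R z) = (if ij z = 0 then real CARD('y) * F \<theta> else 0)"
      proof (cases "ij z = 0")
        case True
        then have "Fj z \<in> Wsp q lam 0" using h1 z by auto
        define v where "v = Fj z (the (\<theta> z))"
        have cst: "\<And>y. Fj z y = v" using Wsp0_const[OF ssi ee] \<open>Fj z \<in> Wsp q lam 0\<close> unfolding v_def by blast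
        have "F \<theta> = v * R z" using Fth[OF z] unfolding v_def .
        then show ?thesis using True by (simp add: cst)
      next
        case False
        then have "(\<Sum>y\<in>UNIV. Fj z y) = 0" using h1 z Wsp_sum_zero[OF ssi ee] by blast
        then show ?thesis using False by (simp add: sum_distrib_right[symmetric])
      qed
    qed
    also have "\<dots> = real (card {z\<in>A. ij z = 0}) * (real CARD('y) * F \<theta>)"
    proof -
      have "A \<inter> {z. ij z = 0} = {z\<in>A. ij z = 0}" by auto
      then show ?thesis using finA by (simp add: sum.If_cases)
    qed
    also have "real (card {z\<in>A. ij z = 0}) = of_int (c 0)"
      using h2 by (metis of_int_of_nat_eq zero_le)
    finally show ?thesis by simp
  qed
  then show ?thesis using supp by auto
qed

lemma Gam_lin: "Gam ((\<lambda>x. c * F x) + G) = (\<lambda>\<theta>. c * Gam F \<theta> + Gam G \<theta>)"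
  by (simp add: Gam_def plus_fun_def sum.distrib sum_distrib_left fun_eq_iff)

lemma Pkb_props:
  fixes q :: "'y::finite \<Rightarrow> 'y \<Rightarrow> real"
  assumes ssi: "symmetric_stochastic_irreducible q" and ee: "eigen_enum q m lam"
    and F: "F \<in> Pkb q m lam n j c"
  shows "(\<forall>\<theta>. \<theta> \<notin> Theta n j \<longrightarrow> F \<theta> = 0) \<and> Gam F = (\<lambda>\<theta>. real CARD('y) * of_int (c 0) * F \<theta>)"
proof -
  have "F \<in> module.span (\<lambda>(c::real) (f::'y Lfun) x. c * f x)
      (\<Union>A\<in>{A. A \<subseteq> {1..n} \<and> card A = j}. fundamental q m lam c A)"
    using F by (simp add: Pkb_def fun_span_def)
  then show ?thesis
  proof (rule module.span_induct_alt[OF mod_fun, where h = "\<lambda>F. (\<forall>\<theta>. \<theta> \<notin> Theta n j \<longrightarrow> F \<theta> = 0) \<and> Gam F = (\<lambda>\<theta>. real CARD('y) * of_int (c 0) * F \<theta>)"])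
    show "(\<forall>\<theta>. \<theta> \<notin> Theta n j \<longrightarrow> (0::'y Lfun) \<theta> = 0) \<and> Gam (0::'y Lfun) = (\<lambda>\<theta>. real CARD('y) * of_int (c 0) * (0::'y Lfun) \<theta>)"
      by (simp add: Gam_def fun_eq_iff)
  next
    fix a :: real and x y :: "'y Lfun"
    assume xS: "x \<in> (\<Union>A\<in>{A. A \<subseteq> {1..n} \<and> card A = j}. fundamental q m lam c A)"
      and py: "(\<forall>\<theta>. \<theta> \<notin> Theta n j \<longrightarrow> y \<theta> = 0) \<and> Gam y = (\<lambda>\<theta>. real CARD('y) * of_int (c 0) * y \<theta>)"
    then obtain A where A: "A \<subseteq> {1..n}" "card A = j" "x \<in> fundamental q m lam c A" by blast
    have px: "(\<forall>\<theta>. \<theta> \<notin> Theta n j \<longrightarrow> x \<theta> = 0) \<and> Gam x = (\<lambda>\<theta>. real CARD('y) * of_int (c 0) * x \<theta>)"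
      by (rule fund_props[OF ssi ee A(3) A(1,2)])
    show "(\<forall>\<theta>. \<theta> \<notin> Theta n j \<longrightarrow> ((\<lambda>\<theta>. a * x \<theta>) + y) \<theta> = 0) \<and> Gam ((\<lambda>\<theta>. a * x \<theta>) + y) = (\<lambda>\<theta>. real CARD('y) * of_int (c 0) * ((\<lambda>\<theta>. a * x \<theta>) + y) \<theta>)"
      unfolding Gam_lin using px py by (simp add: plus_fun_def fun_eq_iff algebra_simps)
  qed
qed



lemma main_ind:
  fixes q :: "'y::finite \<Rightarrow> 'y \<Rightarrow> real"
  assumes ssi: "symmetric_stochastic_irreducible q" and ee: "eigen_enum q m lam"
  shows "\<forall>b F. F \<in> Phk q m lam n k d b \<longrightarrow> k + d + 1 \<le> n \<longrightarrow>
     (\<forall>\<theta>. \<theta> \<notin> Theta n (k + d) \<longrightarrow> F \<theta> = 0) \<and>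
     Gam F = (\<lambda>\<theta>. real CARD('y) * of_int (b 0) * F \<theta>) \<and>
     Dop n (Suc (k + d)) (Dstar n (Suc (k + d)) F) =
       (\<lambda>\<theta>. real CARD('y) * (real d + 1) * (real n - real k - of_int (b 0)) * F \<theta>)"
proof (induction d)
  case 0
  show ?case
  proof (intro allI impI)
    fix b F assume F: "F \<in> Phk q m lam n k 0 b" and kn: "k + 0 + 1 \<le> n"
    have Fp: "F \<in> Pkb q m lam n k b" and D0: "Dop n k F = 0" using F by auto
    note P = Pkb_props[OF ssi ee Fp]
    have "Dop n (Suc k) (Dstar n (Suc k) F) \<theta> =
       real CARD('y) * (real 0 + 1) * (real n - real k - of_int (b 0)) * F \<theta>" for \<theta>
    proof (cases "\<theta> \<in> Theta n k")
      case True
      have "Dop n (Suc k) (Dstar n (Suc k) F) \<theta> =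
          Dstar n k (Dop n k F) \<theta> + real (n - k) * real CARD('y) * F \<theta> - Gam F \<theta>"
        by (rule comm[OF True])
      also have "Dstar n k (Dop n k F) \<theta> = 0" using D0 by (simp add: Dstar_def)
      also have "Gam F \<theta> = real CARD('y) * of_int (b 0) * F \<theta>" using P by simp
      also have "real (n - k) = real n - real k" using kn by (simp add: of_nat_diff)
      finally show ?thesis by (simp add: algebra_simps)
    next
      case False then show ?thesis using P by (simp add: Dop_def)
    qed
    then show "(\<forall>\<theta>. \<theta> \<notin> Theta n (k + 0) \<longrightarrow> F \<theta> = 0) \<and>
     Gam F = (\<lambda>\<theta>. real CARD('y) * of_int (b 0) * F \<theta>) \<and>
     Dop n (Suc (k + 0)) (Dstar n (Suc (k + 0)) F) =
       (\<lambda>\<theta>. real CARD('y) * (real 0 + 1) * (real n - real k - of_int (b 0)) * F \<theta>)"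
      using P by (simp add: fun_eq_iff)
  qed
next
  case (Suc d)
  show ?case
  proof (intro allI impI)
    fix b F assume F: "F \<in> Phk q m lam n k (Suc d) b" and kn: "k + Suc d + 1 \<le> n"
    obtain G where G: "G \<in> Phk q m lam n k d (tprime b)" and FG: "F = Dstar n (k + Suc d) G"
      using F by auto
    have IH: "(\<forall>\<theta>. \<theta> \<notin> Theta n (k + d) \<longrightarrow> G \<theta> = 0) \<and>
     Gam G = (\<lambda>\<theta>. real CARD('y) * of_int (tprime b 0) * G \<theta>) \<and>
     Dop n (Suc (k + d)) (Dstar n (Suc (k + d)) G) =
       (\<lambda>\<theta>. real CARD('y) * (real d + 1) * (real n - real k - of_int (tprime b 0)) * G \<theta>)"
      using Suc.IH G kn by auto
    have tb: "tprime b 0 = b 0 - 1" by (simp add: tprime_def)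
    define j where "j = k + Suc d"
    have jS: "j = Suc (k + d)" by (simp add: j_def)
    have gamF: "Gam F = (\<lambda>\<theta>. (real CARD('y) + real CARD('y) * of_int (tprime b 0)) * F \<theta>)"
      unfolding FG by (rule Gam_Dstar) (use IH in auto)
    then have gamF': "Gam F = (\<lambda>\<theta>. real CARD('y) * of_int (b 0) * F \<theta>)"
      by (simp add: tb algebra_simps fun_eq_iff)
    have supp: "\<forall>\<theta>. \<theta> \<notin> Theta n (k + Suc d) \<longrightarrow> F \<theta> = 0"
      by (simp add: FG Dstar_def)
    have DF: "Dop n j F = (\<lambda>\<theta>. real CARD('y) * (real d + 1) * (real n - real k - of_int (tprime b 0)) * G \<theta>)"
      using IH unfolding FG jS[symmetric] j_def by simp
    have "Dop n (Suc j) (Dstar n (Suc j) F) \<theta> =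
       real CARD('y) * (real (Suc d) + 1) * (real n - real k - of_int (b 0)) * F \<theta>" for \<theta>
    proof (cases "\<theta> \<in> Theta n j")
      case True
      have "Dop n (Suc j) (Dstar n (Suc j) F) \<theta> =
          Dstar n j (Dop n j F) \<theta> + real (n - j) * real CARD('y) * F \<theta> - Gam F \<theta>"
        by (rule comm[OF True])
      also have "Dstar n j (Dop n j F) \<theta> =
          real CARD('y) * (real d + 1) * (real n - real k - of_int (tprime b 0)) * F \<theta>"
        unfolding DF Dstar_scale by (simp add: FG j_def)
      also have "Gam F \<theta> = real CARD('y) * of_int (b 0) * F \<theta>" using gamF' by simp
      also have "real (n - j) = real n - real k - real d - 1" using kn by (simp add: of_nat_diff j_def)
      finally show ?thesis by (simp add: tb algebra_simps)
    next
      case False then show ?thesis using supp by (simp add: Dop_def j_def)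
    qed
    then show "(\<forall>\<theta>. \<theta> \<notin> Theta n (k + Suc d) \<longrightarrow> F \<theta> = 0) \<and>
     Gam F = (\<lambda>\<theta>. real CARD('y) * of_int (b 0) * F \<theta>) \<and>
     Dop n (Suc (k + Suc d)) (Dstar n (Suc (k + Suc d)) F) =
       (\<lambda>\<theta>. real CARD('y) * (real (Suc d) + 1) * (real n - real k - of_int (b 0)) * F \<theta>)"
      using supp gamF' by (simp add: fun_eq_iff j_def)
  qed
qed

lemma tsize_split: "tsize m a = a 0 + tlen m a"
  by (simp add: tsize_def tlen_def sum.atLeast_Suc_atMost)

theorem corollary7p9:
  fixes q :: "'y::finite \<Rightarrow> 'y \<Rightarrow> real"
    and m n h k :: nat and lam :: "nat \<Rightarrow> real" and a :: "nat \<Rightarrow> int"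
    and F :: "'y Lfun"
  assumes "symmetric_stochastic_irreducible q"
    and "eigen_enum q m lam"
    and "k \<le> h" and "h \<le> n - 1" and "1 \<le> n"
    and "\<forall>i\<le>m. 0 \<le> a i"
    and "tsize m a = int h + 1"
    and "tlen m a \<le> int k"
    and "F \<in> Phbk q m lam n h (tprime a) k"
  shows "Delta n h F = (\<lambda>\<theta>. (real CARD('y) * (real n + of_int (tlen m a) - real k - real h)
                                * (real h - real k + 1) - real CARD('y) * (real n - real h)) * F \<theta>)"
proof -
  have F: "F \<in> Phk q m lam n k (h - k) (tprime a)" using assms(9) by (simp add: Phbk_def)
  have kh: "k + (h - k) = h" using assms(3) by simp
  have hn: "k + (h - k) + 1 \<le> n" using assms(3-5) by simp
  have M: "(\<forall>\<theta>. \<theta> \<notin> Theta n h \<longrightarrow> F \<theta> = 0) \<and>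
     Dop n (Suc h) (Dstar n (Suc h) F) =
       (\<lambda>\<theta>. real CARD('y) * (real (h - k) + 1) * (real n - real k - of_int (tprime a 0)) * F \<theta>)"
    using main_ind[OF assms(1,2), of n k "h - k"] F hn kh by auto
  have a0: "of_int (tprime a 0) = (real h - of_int (tlen m a) :: real)"
  proof -
    have "a 0 + tlen m a = int h + 1" using assms(7) tsize_split by simp
    then have "tprime a 0 = int h - tlen m a" by (simp add: tprime_def)
    then show ?thesis by simp
  qed
  show ?thesis
  proof
    fix \<theta>
    show "Delta n h F \<theta> = (real CARD('y) * (real n + of_int (tlen m a) - real k - real h)
                                * (real h - real k + 1) - real CARD('y) * (real n - real h)) * F \<theta>"
    proof (cases "\<theta> \<in> Theta n h")
      case True
      have "Delta n h F \<theta> = Dop n (Suc h) (Dstar n (Suc h) F) \<theta> - real (n - h) * real CARD('y) * F \<theta>"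
        by (rule Delta_eq[OF True])
      also have "Dop n (Suc h) (Dstar n (Suc h) F) \<theta> =
          real CARD('y) * (real (h - k) + 1) * (real n - real k - of_int (tprime a 0)) * F \<theta>"
        using M by simp
      also have "real (n - h) = real n - real h" using hn kh by (simp add: of_nat_diff)
      also have "real (h - k) = real h - real k" using assms(3) by (simp add: of_nat_diff)
      finally show ?thesis unfolding a0 by (simp add: algebra_simps)
    next
      case False
      then show ?thesis using M by (simp add: Delta_def)
    qed
  qed
qed


end
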